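(* In the setting of the context, let $\tilde f\in\mathcal L^1_{uni}$. Then the map $(s,\eta)\mapsto\mathbb E^{s,\eta}[\int_s^T\tilde f_rdV_r]$ from $[0,T]\times\Omega$ to $\mathbb R$ is $\mathbb F^o$-progressively measurable.
   Context: Let $E$ be Polish, $\Omega=\mathbb D(\mathbb R_+,E)$, $X_t(\omega)=\omega(t)$, $\mathcal F=\sigma(X_r,r\ge0)$, $\mathcal F^o_t=\sigma(X_r,r\le t)$, $\mathcal F_t=\bigcap_{u>t}\mathcal F^o_u$, $\mathbb F^o=(\mathcal F^o_t)$, $\omega^t=\omega(\cdot\wedge t)$. $(\mathbb P^{s,\eta})_{(s,\eta)\in\mathbb R_+\times\Omega}$ is a family of probabilities on $(\Omega,\mathcal F)$ such that $\mathbb P^{s,\eta}(\omega^s=\eta^s)=1$, $\eta\mapsto\mathbb P^{s,\eta}(F)$ is $\mathcal F^o_s$-measurable, $(t,\omega)\mapsto\mathbb P^{t,\omega}(F)$ is $\mathbb F^o$-progressively measurable, and $\mathbb P^{s,\eta}(F|\mathcal F_t)(\omega)=\mathbb P^{s,\eta}(F|\mathcal F^o_t)(\omega)=\mathbb P^{t,\omega}(F)$ for $\mathbb P^{s,\eta}$-a.a. $\omega$, all $t\ge s$, $F\in\mathcal F$. Fix $T>0$ and $V:[0,T]\to\mathbb R_+$ continuous non-decreasing. $\mathcal L^1_{uni}$ is the set of $\mathbb F^o$-progressively measurable processes $Y$ with $\mathbb E^{s,\eta}[\int_s^T|Y_r|dV_r]<\infty$ for all $(s,\eta)\in[0,T]\times\Omega$.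 *)

theory Defs
  imports "HOL-Probability.Probability"
begin

text \<open>Canonical space: cadlag paths on [0,\<infinity>) with values in a Polish space.
  Paths are represented as functions on the reals, frozen at their value at 0 for negative times.\<close>

definition cadlag :: "(real \<Rightarrow> 'e::topological_space) \<Rightarrow> bool" where
  "cadlag \<omega> \<longleftrightarrow> (\<forall>t\<ge>0. continuous (at_right t) \<omega>) \<and> (\<forall>t>0. \<exists>l. (\<omega> \<longlongrightarrow> l) (at_left t))"

definition Skor :: "(real \<Rightarrow> 'e::polish_space) set" where
  "Skor = {\<omega>. cadlag \<omega> \<and> (\<forall>r<0. \<omega> r = \<omega> 0)}"

definition stopped :: "real \<Rightarrow> (real \<Rightarrow> 'e) \<Rightarrow> (real \<Rightarrow> 'e)" where
  "stopped t \<omega> = (\<lambda>r. \<omega> (min r t))"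

definition FF :: "(real \<Rightarrow> 'e::polish_space) measure" where
  "FF = sigma Skor {(\<lambda>\<omega>. \<omega> r) -` A \<inter> Skor | r A. 0 \<le> r \<and> A \<in> sets borel}"

definition Fo :: "real \<Rightarrow> (real \<Rightarrow> 'e::polish_space) measure" where
  "Fo t = sigma Skor {(\<lambda>\<omega>. \<omega> r) -` A \<inter> Skor | r A. 0 \<le> r \<and> r \<le> t \<and> A \<in> sets borel}"

definition Fplus :: "real \<Rightarrow> (real \<Rightarrow> 'e::polish_space) measure" where
  "Fplus t = sigma Skor (\<Inter>u\<in>{t<..}. sets (Fo u))"

definition progressive_on :: "real set \<Rightarrow> (real \<Rightarrow> (real \<Rightarrow> 'e::polish_space) \<Rightarrow> real) \<Rightarrow> bool" where
  "progressive_on S Y \<longleftrightarrow>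
     (\<forall>t\<ge>0. (\<lambda>(r,\<omega>). Y r \<omega>) \<in> borel_measurable (restrict_space borel (S \<inter> {0..t}) \<Otimes>\<^sub>M Fo t))"

definition markov_family ::
    "(real \<Rightarrow> (real \<Rightarrow> 'e::polish_space) \<Rightarrow> (real \<Rightarrow> 'e) measure) \<Rightarrow> bool" where
  "markov_family P \<longleftrightarrow>
     (\<forall>s\<ge>0. \<forall>\<eta>\<in>Skor. prob_space (P s \<eta>) \<and> sets (P s \<eta>) = sets FF \<and>
                        measure (P s \<eta>) {\<omega>\<in>Skor. stopped s \<omega> = stopped s \<eta>} = 1) \<and>
     (\<forall>s\<ge>0. \<forall>F\<in>sets FF. (\<lambda>\<eta>. measure (P s \<eta>) F) \<in> borel_measurable (Fo s)) \<and>
     (\<forall>F\<in>sets FF. progressive_on {0..} (\<lambda>t \<omega>. measure (P t \<omega>) F)) \<and>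
     (\<forall>s\<ge>0. \<forall>\<eta>\<in>Skor. \<forall>t\<ge>s. \<forall>F\<in>sets FF.
        (AE \<omega> in P s \<eta>. real_cond_exp (P s \<eta>) (Fplus t) (indicator F) \<omega> = measure (P t \<omega>) F) \<and>
        (AE \<omega> in P s \<eta>. real_cond_exp (P s \<eta>) (Fo t) (indicator F) \<omega> = measure (P t \<omega>) F))"

definition dV :: "real \<Rightarrow> (real \<Rightarrow> real) \<Rightarrow> real measure" where
  "dV T V = interval_measure (\<lambda>r. V (max 0 (min T r)))"

definition L1_uni ::
    "(real \<Rightarrow> (real \<Rightarrow> 'e::polish_space) \<Rightarrow> (real \<Rightarrow> 'e) measure) \<Rightarrow> real \<Rightarrow> (real \<Rightarrow> real)
     \<Rightarrow> (real \<Rightarrow> (real \<Rightarrow> 'e) \<Rightarrow> real) set" where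
  "L1_uni P T V = {Y. progressive_on {0..T} Y \<and>
     (\<forall>s\<in>{0..T}. \<forall>\<eta>\<in>Skor.
        (\<integral>\<^sup>+\<omega>. (\<integral>\<^sup>+ r. ennreal \<bar>Y r \<omega>\<bar> * indicator {s..T} r \<partial>dV T V) \<partial>P s \<eta>) < \<infinity>)}"

end

theory Submission
  imports Defs
begin

lemma integral_measurable_kernel_real:
  fixes f :: "'a \<Rightarrow> 'b \<Rightarrow> real"
  assumes f[measurable]: "case_prod f \<in> borel_measurable (M \<Otimes>\<^sub>M N)"
    and L[measurable]: "L \<in> measurable M (subprob_algebra N)"
  shows "(\<lambda>x. integral\<^sup>L (L x) (f x)) \<in> borel_measurable M"
proof -
  have p[measurable]: "(\<lambda>x. \<integral>\<^sup>+y. ennreal (f x y) \<partial>L x) \<in> borel_measurable M"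
    by (rule nn_integral_measurable_subprob_algebra2[OF _ L]) measurable
  have n[measurable]: "(\<lambda>x. \<integral>\<^sup>+y. ennreal (- f x y) \<partial>L x) \<in> borel_measurable M"
    by (rule nn_integral_measurable_subprob_algebra2[OF _ L]) measurable
  have eq: "integral\<^sup>L (L x) (f x) = (if (\<integral>\<^sup>+y. ennreal (f x y) \<partial>L x) \<noteq> \<infinity> \<and> (\<integral>\<^sup>+y. ennreal (- f x y) \<partial>L x) \<noteq> \<infinity>
     then enn2real (\<integral>\<^sup>+y. ennreal (f x y) \<partial>L x) - enn2real (\<integral>\<^sup>+y. ennreal (- f x y) \<partial>L x) else 0)"
    if x: "x \<in> space M" for x
  proof -
    have sL: "sets (L x) = sets N" by (rule sets_kernel[OF L x])
    have "f x \<in> borel_measurable N" using x by measurable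
    then have fm: "f x \<in> borel_measurable (L x)" using measurable_cong_sets[OF sL refl] by blast
    show ?thesis
    proof (cases "integrable (L x) (f x)")
      case True
      then show ?thesis using real_lebesgue_integral_def[OF True] by (auto simp: real_integrable_def)
    next
      case False
      then show ?thesis using fm by (auto simp: real_integrable_def not_integrable_integral_eq)
    qed
  qed
  show ?thesis
    by (subst measurable_cong[OF eq]) (auto, measurable)
qed

lemma space_Fo[simp]: "space (Fo t) = Skor"
  unfolding Fo_def by (rule space_measure_of) auto

lemma space_FF[simp]: "space FF = Skor"
  unfolding FF_def by (rule space_measure_of) auto

lemma sets_Fo_FF: "sets (Fo t) \<subseteq> sets FF"
  unfolding Fo_def FF_def
  by (subst sets_measure_of, force)+ (rule sigma_sets_mono', auto)

lemma id_FF_Fo: "(\<lambda>x. x) \<in> measurable FF (Fo t)"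
proof (rule measurableI)
  fix A assume A: "A \<in> sets (Fo t)"
  then have "A \<subseteq> Skor" using sets.sets_into_space[OF A] by simp
  then have "(\<lambda>x. x) -` A \<inter> space FF = A" by auto
  then show "(\<lambda>x. x) -` A \<inter> space FF \<in> sets FF" using A sets_Fo_FF by auto
qed auto

lemma extend_restrict_pair:
  fixes g :: "real \<times> (real \<Rightarrow> 'e::polish_space) \<Rightarrow> real"
  assumes g: "g \<in> borel_measurable (restrict_space borel A \<Otimes>\<^sub>M Fo t)" and A: "A \<in> sets borel"
  shows "(\<lambda>x. if fst x \<in> A then g x else 0) \<in> borel_measurable (borel \<Otimes>\<^sub>M FF)"
proof -
  have idm0: "(\<lambda>x. (fst x, snd x)) \<in> measurable (restrict_space (borel \<Otimes>\<^sub>M Fo t) (A \<times> Skor)) (restrict_space borel A \<Otimes>\<^sub>M Fo t)"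
  proof (rule measurable_Pair)
    show "(\<lambda>x. fst x) \<in> measurable (restrict_space (borel \<Otimes>\<^sub>M Fo t) (A \<times> Skor)) (restrict_space borel A)"
      by (rule measurable_restrict_space2) (auto simp: space_restrict_space intro: measurable_restrict_space1)
    show "(\<lambda>x. snd x) \<in> measurable (restrict_space (borel \<Otimes>\<^sub>M Fo t) (A \<times> Skor)) (Fo t)"
      by (rule measurable_restrict_space1) measurable
  qed
  have idm: "(\<lambda>x. x) \<in> measurable (restrict_space (borel \<Otimes>\<^sub>M Fo t) (A \<times> Skor)) (restrict_space borel A \<Otimes>\<^sub>M Fo t)"
    using idm0 by simp
  have gR: "g \<in> borel_measurable (restrict_space (borel \<Otimes>\<^sub>M Fo t) (A \<times> Skor))"
    using measurable_comp[OF idm g] by (simp add: comp_def)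
  have h1: "(\<lambda>x. if x \<in> A \<times> Skor then g x else 0) \<in> borel_measurable (borel \<Otimes>\<^sub>M Fo t)"
  proof -
    have "A \<times> (Skor::(real\<Rightarrow>'e) set) \<in> sets (borel \<Otimes>\<^sub>M (Fo t :: (real\<Rightarrow>'e) measure))" using pair_measureI[OF A sets.top[of "Fo t"]] by simp
    moreover have "A \<times> (Skor::(real\<Rightarrow>'e) set) \<inter> space (borel \<Otimes>\<^sub>M (Fo t :: (real\<Rightarrow>'e) measure)) = A \<times> Skor"
      by (auto simp: space_pair_measure)
    ultimately have "A \<times> (Skor::(real\<Rightarrow>'e) set) \<inter> space (borel \<Otimes>\<^sub>M (Fo t :: (real\<Rightarrow>'e) measure)) \<in> sets (borel \<Otimes>\<^sub>M (Fo t :: (real\<Rightarrow>'e) measure))"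
      by simp
    from measurable_restrict_space_iff[OF this, of 0 borel g] gR show ?thesis by simp
  qed
  have h2: "(\<lambda>x. (fst x, snd x)) \<in> measurable (borel \<Otimes>\<^sub>M FF) (borel \<Otimes>\<^sub>M Fo t)"
    by (rule measurable_Pair) (auto intro: measurable_comp[OF measurable_snd id_FF_Fo, simplified comp_def])
  have h3: "(\<lambda>x. if x \<in> A \<times> Skor then g x else 0) \<in> borel_measurable (borel \<Otimes>\<^sub>M FF)"
    using measurable_comp[OF h2 h1] by (simp add: comp_def)
  have h4: "\<And>x. x \<in> space (borel \<Otimes>\<^sub>M FF) \<Longrightarrow> (if x \<in> A \<times> Skor then g x else 0) = (if fst x \<in> A then g x else 0)"
    by (auto simp: space_pair_measure mem_Times_iff)
  show ?thesis using h3 measurable_cong[where M="borel \<Otimes>\<^sub>M FF" and f="\<lambda>x. if x \<in> A \<times> Skor then g x else 0" and g="\<lambda>x. if fst x \<in> A then g x else 0" and M'=borel] h4 by blast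
qed


lemma sets_dV[measurable_cong]: "sets (dV T V) = sets borel"
  by (simp add: dV_def)

theorem lemmaA1:
  fixes P :: "real \<Rightarrow> (real \<Rightarrow> 'e::polish_space) \<Rightarrow> (real \<Rightarrow> 'e) measure"
    and T :: real and V :: "real \<Rightarrow> real" and f :: "real \<Rightarrow> (real \<Rightarrow> 'e) \<Rightarrow> real"
  assumes "markov_family P"
    and "T > 0"
    and "continuous_on {0..T} V" and "mono_on {0..T} V" and "\<forall>r\<in>{0..T}. V r \<ge> 0"
    and "f \<in> L1_uni P T V"
  shows "progressive_on {0..T}
           (\<lambda>s \<eta>. \<integral>\<omega>. (\<integral>r. f r \<omega> * indicator {s..T} r \<partial>dV T V) \<partial>P s \<eta>)"
proof -
  have mf: "markov_family P" by fact
  from assms(6) have fprog: "progressive_on {0..T} f" by (simp add: L1_uni_def)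
  define F where "F = (\<lambda>r. V (max 0 (min T r)))"
  have Fin: "max 0 (min T r) \<in> {0..T}" for r using assms(2) by auto
  have Fmono: "F x \<le> F y" if "x \<le> y" for x y
    unfolding F_def by (rule mono_onD[OF assms(4) Fin Fin]) (use that in auto)
  have Fcont: "continuous_on UNIV F"
    unfolding F_def
    by (rule continuous_on_compose2[OF assms(3)]) (auto intro!: continuous_intros simp: Fin assms(2) less_imp_le)
  have Frc: "continuous (at_right a) F" for a
    using Fcont by (simp add: continuous_on_eq_continuous_at continuous_at_imp_continuous_at_within)
  interpret dVs: sigma_finite_measure "dV T V"
    unfolding dV_def F_def[symmetric] by (rule sigma_finite_interval_measure[OF Fmono Frc])
  define f0 where "f0 = (\<lambda>x::real \<times> (real\<Rightarrow>'e). if fst x \<in> {0..T} then f (fst x) (snd x) else 0)"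
  have f0m[measurable]: "f0 \<in> borel_measurable (borel \<Otimes>\<^sub>M FF)"
  proof -
    have "(\<lambda>(r,\<omega>). f r \<omega>) \<in> borel_measurable (restrict_space borel {0..T} \<Otimes>\<^sub>M (Fo T :: (real\<Rightarrow>'e) measure))"
    proof -
      have "(\<lambda>(r,\<omega>). f r \<omega>) \<in> borel_measurable (restrict_space borel ({0..T} \<inter> {0..T}) \<Otimes>\<^sub>M (Fo T :: (real\<Rightarrow>'e) measure))"
        using fprog[unfolded progressive_on_def, rule_format, of T] assms(2) by (simp add: less_imp_le)
      then show ?thesis by simp
    qed
    from extend_restrict_pair[OF this] show ?thesis by (simp add: f0_def case_prod_beta cong: if_cong)
  qed
  show ?thesis unfolding progressive_on_def
  proof (intro allI impI)
    fix t :: real assume t: "0 \<le> t"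
    define S where "S = {0..T} \<inter> {0..t}"
    define M where "M = restrict_space borel S \<Otimes>\<^sub>M (Fo t :: (real\<Rightarrow>'e) measure)"
    have spM: "space M = S \<times> Skor" by (simp add: M_def space_pair_measure space_restrict_space)
    have fstM[measurable]: "(\<lambda>x. fst x) \<in> borel_measurable M"
    proof -
      have "(\<lambda>x. x) \<in> borel_measurable (restrict_space borel S)"
        by (rule measurable_restrict_space1) (rule measurable_ident_sets, rule refl)
      from measurable_compose[OF measurable_fst this] show ?thesis unfolding M_def .
    qed
    have sndM[measurable]: "(\<lambda>x. snd x) \<in> measurable M (Fo t)"
      unfolding M_def by (rule measurable_snd)
    have L: "(\<lambda>x. P (fst x) (snd x)) \<in> measurable M (subprob_algebra FF)"
    proof (rule measurable_subprob_algebra)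
      fix a assume "a \<in> space M"
      then have a: "fst a \<ge> 0" "snd a \<in> Skor" by (auto simp: spM S_def mem_Times_iff)
      show "subprob_space (P (fst a) (snd a))"
        using mf a unfolding markov_family_def by (auto intro: prob_space_imp_subprob_space)
      show "sets (P (fst a) (snd a)) = sets FF"
        using mf a unfolding markov_family_def by auto
    next
      fix A assume A: "A \<in> sets (FF :: (real\<Rightarrow>'e) measure)"
      from mf A have "progressive_on {0..} (\<lambda>t \<omega>. measure (P t \<omega>) A)"
        unfolding markov_family_def by auto
      then have pm: "(\<lambda>(r,\<omega>). measure (P r \<omega>) A) \<in> borel_measurable (restrict_space borel ({0..}\<inter>{0..t}) \<Otimes>\<^sub>M Fo t)"
        using t unfolding progressive_on_def by auto
      have idm: "(\<lambda>x. (fst x, snd x)) \<in> measurable M (restrict_space borel ({0..}\<inter>{0..t}) \<Otimes>\<^sub>M Fo t)"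
      proof (rule measurable_Pair)
        show "(\<lambda>x. fst x) \<in> measurable M (restrict_space borel ({0..}\<inter>{0..t}))"
          by (rule measurable_restrict_space2) (auto simp: spM S_def mem_Times_iff)
      qed (rule sndM)
      have "(\<lambda>x. measure (P (fst x) (snd x)) A) \<in> borel_measurable M"
        using measurable_comp[OF idm pm] by (simp add: comp_def case_prod_beta)
      then have m2: "(\<lambda>x. ennreal (measure (P (fst x) (snd x)) A)) \<in> borel_measurable M"
        by measurable
      have eq: "emeasure (P (fst x) (snd x)) A = ennreal (measure (P (fst x) (snd x)) A)" if "x \<in> space M" for x
      proof -
        from that have a: "fst x \<ge> 0" "snd x \<in> Skor" by (auto simp: spM S_def mem_Times_iff)
        then have "prob_space (P (fst x) (snd x))" using mf unfolding markov_family_def by auto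
        then show ?thesis by (simp add: prob_space_def finite_measure.emeasure_eq_measure)
      qed
      show "(\<lambda>x. emeasure (P (fst x) (snd x)) A) \<in> borel_measurable M"
        by (rule measurable_cong[THEN iffD2, OF eq m2])
    qed
    have G: "(\<lambda>(x, \<omega>). \<integral>r. f r \<omega> * indicator {fst x..T} r \<partial>dV T V) \<in> borel_measurable (M \<Otimes>\<^sub>M FF)"
    proof -
      have a: "(\<lambda>y. f0 (snd y, snd (fst y))) \<in> borel_measurable ((M \<Otimes>\<^sub>M FF) \<Otimes>\<^sub>M dV T V)"
        by measurable
      have b: "(\<lambda>y. if fst (fst (fst y)) \<le> snd y \<and> snd y \<le> T then 1 else 0 :: real) \<in> borel_measurable ((M \<Otimes>\<^sub>M FF) \<Otimes>\<^sub>M dV T V)"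
        by measurable
      have ab: "(\<lambda>y. f0 (snd y, snd (fst y)) * (if fst (fst (fst y)) \<le> snd y \<and> snd y \<le> T then 1 else 0 :: real)) \<in> borel_measurable ((M \<Otimes>\<^sub>M FF) \<Otimes>\<^sub>M dV T V)"
        using a b by measurable
      have eq: "f0 (snd y, snd (fst y)) * (if fst (fst (fst y)) \<le> snd y \<and> snd y \<le> T then 1 else 0 :: real)
          = (case y of (x, r) \<Rightarrow> f r (snd x) * indicator {fst (fst x)..T} r)"
        if "y \<in> space ((M \<Otimes>\<^sub>M FF) \<Otimes>\<^sub>M dV T V)" for y
      proof -
        from that have "fst (fst (fst y)) \<in> S" by (auto simp: space_pair_measure spM mem_Times_iff)
        then have "fst (fst (fst y)) \<ge> 0" by (auto simp: S_def)
        then show ?thesis by (auto simp: f0_def split_beta' indicator_def)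
      qed
      have "(\<lambda>(x, r). f r (snd x) * indicator {fst (fst x)..T} r) \<in> borel_measurable ((M \<Otimes>\<^sub>M FF) \<Otimes>\<^sub>M dV T V)"
        by (rule measurable_cong[THEN iffD1, OF eq ab])
      from dVs.borel_measurable_lebesgue_integral[OF this]
      show ?thesis by (simp add: split_beta')
    qed
    have "(\<lambda>x. \<integral>\<omega>. (\<integral>r. f r \<omega> * indicator {fst x..T} r \<partial>dV T V) \<partial>P (fst x) (snd x)) \<in> borel_measurable M"
      by (rule integral_measurable_kernel_real[OF _ L]) (use G in \<open>simp add: split_beta'\<close>)
    then show "(\<lambda>(s, \<eta>). \<integral>\<omega>. (\<integral>r. f r \<omega> * indicator {s..T} r \<partial>dV T V) \<partial>P s \<eta>)
        \<in> borel_measurable (restrict_space borel ({0..T} \<inter> {0..t}) \<Otimes>\<^sub>M Fo t)"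
      by (simp add: M_def S_def split_beta')
  qed
qed

end
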